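(* Let $\mathcal S$ be a Garside family in a cancellative category $\mathcal C$. The following are equivalent: (i) For all $f,g\in\mathcal C$ that admit a common right-multiple, there exist $\mathcal S$-normal paths $u,v$ such that the negative–positive path $\overline u\,|\,v$ is symmetric $\mathcal S$-normal and $(f,g)\bowtie([u],[v])$; (ii) $\mathcal C$ admits conditional weak left-lcms.
   Context: A category is cancellative if $fg=fg'\Rightarrow g=g'$ and $gf=g'f\Rightarrow g=g'$. $\mathcal C^\times$ is the family of invertible elements; for $\mathcal S\subseteq\mathcal C$, $\mathcal S^\sharp=\mathcal S\mathcal C^\times\cup\mathcal C^\times$. $f\preccurlyeq g$ means $g=fg'$ for some $g'$. A length-two path $(g_1,g_2)$ is $\mathcal S$-greedy if for all $s\in\mathcal S$ and $f\in\mathcal C$ with $fg_1$ defined, $s\preccurlyeq fg_1g_2$ implies $s\preccurlyeq fg_1$; a path is $\mathcal S$-greedy if all its length-two subpaths are. A path is $\mathcal S$-normal if it is $\mathcal S$-greedy and all its entries lie in $\mathcal S^\sharp$. For a path $u=(s_1,\dots,s_p)$, $[u]$ denotes the product $s_1\cdots s_p$ (an identity-element for an empty path). $\mathcal S$ is a Garside family in $\mathcal C$ if every element of $\mathcal C$ is $[u]$ for some $\mathcal S$-normal path $u$. Two elements $f,g$ with the same source are left-disjoint if whenever $h\preccurlyeq h'f$ and $h\preccurlyeq h'g$, then $h\preccurlyeq h'$. For $\mathcal S$-normal paths $u,v$ with the same source, the path $\overline u\,|\,v$ is symmetric $\mathcal S$-normal if, in case $u$ and $v$ are both nonempty, their first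 entries are left-disjoint. For pairs of elements with common source, $(f,g)\bowtie(f',g')$ means there exist $h,h'$ with $hf=h'f'$ and $hg=h'g'$. An element $h$ is a weak left-lcm of $f,g$ (same target) if $h$ is a common left-multiple of $f$ and $g$ and every common left-multiple of $f$ and $g$ that admits a common left-multiple with $h$ is a left-multiple of $h$. $\mathcal C$ admits conditional weak left-lcms if, whenever $f,g$ admit a common left-multiple $h_0$, they admit a weak left-lcm $h$ such that $h_0$ is a left-multiple of $h$. *)

theory Defs
  imports Main
begin

text \<open>Composition is written
left-to-right as in the paper: comp C f g is "f g", defined when tgt f = src g.\<close>

record ('o, 'm) cat =
  obj  :: "'o set"
  mor  :: "'m set"
  src  :: "'m \<Rightarrow> 'o"
  tgt  :: "'m \<Rightarrow> 'o"
  comp :: "'m \<Rightarrow> 'm \<Rightarrow> 'm"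
  idm  :: "'o \<Rightarrow> 'm"

definition category :: "('o, 'm) cat \<Rightarrow> bool" where
  "category C \<longleftrightarrow>
     (\<forall>f\<in>mor C. src C f \<in> obj C \<and> tgt C f \<in> obj C) \<and>
     (\<forall>x\<in>obj C. idm C x \<in> mor C \<and> src C (idm C x) = x \<and> tgt C (idm C x) = x) \<and>
     (\<forall>f\<in>mor C. \<forall>g\<in>mor C. tgt C f = src C g \<longrightarrow>
        comp C f g \<in> mor C \<and> src C (comp C f g) = src C f \<and> tgt C (comp C f g) = tgt C g) \<and>
     (\<forall>f\<in>mor C. \<forall>g\<in>mor C. \<forall>h\<in>mor C. tgt C f = src C g \<longrightarrow> tgt C g = src C h \<longrightarrow>
        comp C (comp C f g) h = comp C f (comp C g h)) \<and>
     (\<forall>f\<in>mor C. comp C (idm C (src C f)) f = f \<and> comp C f (idm C (tgt C f)) = f)"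

definition cancellative :: "('o, 'm) cat \<Rightarrow> bool" where
  "cancellative C \<longleftrightarrow>
     (\<forall>f\<in>mor C. \<forall>g\<in>mor C. \<forall>g'\<in>mor C.
        tgt C f = src C g \<longrightarrow> tgt C f = src C g' \<longrightarrow> comp C f g = comp C f g' \<longrightarrow> g = g') \<and>
     (\<forall>f\<in>mor C. \<forall>g\<in>mor C. \<forall>g'\<in>mor C.
        tgt C g = src C f \<longrightarrow> tgt C g' = src C f \<longrightarrow> comp C g f = comp C g' f \<longrightarrow> g = g')"

definition invertibles :: "('o, 'm) cat \<Rightarrow> 'm set" where
  "invertibles C = {f \<in> mor C. \<exists>g\<in>mor C. src C g = tgt C f \<and> tgt C g = src C f \<and>
      comp C f g = idm C (src C f) \<and> comp C g f = idm C (tgt C f)}"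

definition sharp :: "('o, 'm) cat \<Rightarrow> 'm set \<Rightarrow> 'm set" where
  "sharp C S = {comp C s e | s e. s \<in> S \<and> e \<in> invertibles C \<and> tgt C s = src C e}
                \<union> invertibles C"

definition left_div :: "('o, 'm) cat \<Rightarrow> 'm \<Rightarrow> 'm \<Rightarrow> bool" where
  "left_div C f g \<longleftrightarrow> f \<in> mor C \<and> (\<exists>g'\<in>mor C. src C g' = tgt C f \<and> g = comp C f g')"

definition left_mult :: "('o, 'm) cat \<Rightarrow> 'm \<Rightarrow> 'm \<Rightarrow> bool" where
  "left_mult C h f \<longleftrightarrow> f \<in> mor C \<and> (\<exists>k\<in>mor C. tgt C k = src C f \<and> h = comp C k f)"

fun is_path :: "('o, 'm) cat \<Rightarrow> 'o \<Rightarrow> 'm list \<Rightarrow> bool" where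
  "is_path C x [] \<longleftrightarrow> x \<in> obj C"
| "is_path C x (s # u) \<longleftrightarrow> s \<in> mor C \<and> src C s = x \<and> is_path C (tgt C s) u"

fun path_prod :: "('o, 'm) cat \<Rightarrow> 'o \<Rightarrow> 'm list \<Rightarrow> 'm" where
  "path_prod C x [] = idm C x"
| "path_prod C x (s # u) = comp C s (path_prod C (tgt C s) u)"

definition greedy2 :: "('o, 'm) cat \<Rightarrow> 'm set \<Rightarrow> 'm \<Rightarrow> 'm \<Rightarrow> bool" where
  "greedy2 C S g1 g2 \<longleftrightarrow>
     (\<forall>s\<in>S. \<forall>f\<in>mor C. tgt C f = src C g1 \<longrightarrow>
        left_div C s (comp C (comp C f g1) g2) \<longrightarrow> left_div C s (comp C f g1))"

definition greedy_path :: "('o, 'm) cat \<Rightarrow> 'm set \<Rightarrow> 'm list \<Rightarrow> bool" where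
  "greedy_path C S u \<longleftrightarrow> (\<forall>i. Suc i < length u \<longrightarrow> greedy2 C S (u ! i) (u ! Suc i))"

definition normal_path :: "('o, 'm) cat \<Rightarrow> 'm set \<Rightarrow> 'm list \<Rightarrow> bool" where
  "normal_path C S u \<longleftrightarrow> greedy_path C S u \<and> set u \<subseteq> sharp C S"

definition garside_family :: "('o, 'm) cat \<Rightarrow> 'm set \<Rightarrow> bool" where
  "garside_family C S \<longleftrightarrow> S \<subseteq> mor C \<and>
     (\<forall>g\<in>mor C. \<exists>u. is_path C (src C g) u \<and> normal_path C S u \<and> path_prod C (src C g) u = g)"

definition left_disjoint :: "('o, 'm) cat \<Rightarrow> 'm \<Rightarrow> 'm \<Rightarrow> bool" where
  "left_disjoint C f g \<longleftrightarrow>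
     (\<forall>h\<in>mor C. \<forall>h'\<in>mor C. tgt C h' = src C f \<longrightarrow>
        left_div C h (comp C h' f) \<longrightarrow> left_div C h (comp C h' g) \<longrightarrow> left_div C h h')"

text \<open>\<open>\<overline>u | v\<close> is symmetric S-normal (u, v paths from the common source x).\<close>
definition sym_normal :: "('o, 'm) cat \<Rightarrow> 'm set \<Rightarrow> 'o \<Rightarrow> 'm list \<Rightarrow> 'm list \<Rightarrow> bool" where
  "sym_normal C S x u v \<longleftrightarrow> is_path C x u \<and> is_path C x v \<and>
     normal_path C S u \<and> normal_path C S v \<and>
     (u \<noteq> [] \<and> v \<noteq> [] \<longrightarrow> left_disjoint C (hd u) (hd v))"

definition bowtie :: "('o, 'm) cat \<Rightarrow> 'm \<times> 'm \<Rightarrow> 'm \<times> 'm \<Rightarrow> bool" where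
  "bowtie C p q \<longleftrightarrow> (case p of (f, g) \<Rightarrow> case q of (f', g') \<Rightarrow>
     (\<exists>h\<in>mor C. \<exists>h'\<in>mor C. tgt C h = src C f \<and> tgt C h' = src C f' \<and>
        comp C h f = comp C h' f' \<and> comp C h g = comp C h' g'))"

definition weak_left_lcm :: "('o, 'm) cat \<Rightarrow> 'm \<Rightarrow> 'm \<Rightarrow> 'm \<Rightarrow> bool" where
  "weak_left_lcm C h f g \<longleftrightarrow> left_mult C h f \<and> left_mult C h g \<and>
     (\<forall>h1. left_mult C h1 f \<longrightarrow> left_mult C h1 g \<longrightarrow>
        (\<exists>k. left_mult C k h1 \<and> left_mult C k h) \<longrightarrow> left_mult C h1 h)"

definition cond_weak_left_lcms :: "('o, 'm) cat \<Rightarrow> bool" where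
  "cond_weak_left_lcms C \<longleftrightarrow>
     (\<forall>f\<in>mor C. \<forall>g\<in>mor C. \<forall>h0. tgt C f = tgt C g \<longrightarrow>
        left_mult C h0 f \<longrightarrow> left_mult C h0 g \<longrightarrow>
        (\<exists>h. weak_left_lcm C h f g \<and> left_mult C h0 h))"

definition common_right_mult :: "('o, 'm) cat \<Rightarrow> 'm \<Rightarrow> 'm \<Rightarrow> bool" where
  "common_right_mult C f g \<longleftrightarrow> (\<exists>h. left_div C f h \<and> left_div C g h)"

end

theory Submission
  imports Defs
begin

locale ccat =
  fixes C :: "('o, 'm) cat"
  assumes cat: "category C" and canc: "cancellative C"
begin

abbreviation M where "M \<equiv> mor C"
abbreviation cc (infixl "\<odot>" 70) where "f \<odot> g \<equiv> comp C f g"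

lemma cm:
  assumes "f \<in> M" "g \<in> M" "tgt C f = src C g"
  shows "f \<odot> g \<in> M" "src C (f \<odot> g) = src C f" "tgt C (f \<odot> g) = tgt C g"
  using cat assms unfolding category_def by blast+

lemma assoc:
  assumes "f \<in> M" "g \<in> M" "h \<in> M" "tgt C f = src C g" "tgt C g = src C h"
  shows "f \<odot> g \<odot> h = f \<odot> (g \<odot> h)"
  using cat assms unfolding category_def by blast

lemma src_obj: "f \<in> M \<Longrightarrow> src C f \<in> obj C"
  using cat unfolding category_def by blast
lemma tgt_obj: "f \<in> M \<Longrightarrow> tgt C f \<in> obj C"
  using cat unfolding category_def by blast
lemma idm: assumes "x \<in> obj C" shows "idm C x \<in> M" "src C (idm C x) = x" "tgt C (idm C x) = x"
  using cat assms unfolding category_def by blast+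
lemma lid: "f \<in> M \<Longrightarrow> idm C (src C f) \<odot> f = f"
  using cat unfolding category_def by blast
lemma rid: "f \<in> M \<Longrightarrow> f \<odot> idm C (tgt C f) = f"
  using cat unfolding category_def by blast
lemma lcan: "\<lbrakk>f \<in> M; g \<in> M; g' \<in> M; tgt C f = src C g; tgt C f = src C g'; f \<odot> g = f \<odot> g'\<rbrakk> \<Longrightarrow> g = g'"
  using canc unfolding cancellative_def by blast
lemma rcan: "\<lbrakk>f \<in> M; g \<in> M; g' \<in> M; tgt C g = src C f; tgt C g' = src C f; g \<odot> f = g' \<odot> f\<rbrakk> \<Longrightarrow> g = g'"
  using canc unfolding cancellative_def by blast

lemma ldE:
  assumes "left_div C s X"
  obtains g where "s \<in> M" "g \<in> M" "src C g = tgt C s" "X = s \<odot> g"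
  using assms unfolding left_div_def by blast

lemma ldI: "s \<in> M \<Longrightarrow> g \<in> M \<Longrightarrow> src C g = tgt C s \<Longrightarrow> X = s \<odot> g \<Longrightarrow> left_div C s X"
  unfolding left_div_def by blast

lemma lmE:
  assumes "left_mult C h f"
  obtains k where "f \<in> M" "k \<in> M" "tgt C k = src C f" "h = k \<odot> f"
  using assms unfolding left_mult_def by blast

lemma lmI: "f \<in> M \<Longrightarrow> k \<in> M \<Longrightarrow> tgt C k = src C f \<Longrightarrow> h = k \<odot> f \<Longrightarrow> left_mult C h f"
  unfolding left_mult_def by blast

lemma ld_mor: assumes "left_div C s X" shows "X \<in> M" "src C X = src C s"
  using assms by (auto elim!: ldE simp: cm)

lemma ld_right:
  assumes "left_div C s X" "y \<in> M" "tgt C X = src C y"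
  shows "left_div C s (X \<odot> y)"
proof -
  obtain g where g: "s \<in> M" "g \<in> M" "src C g = tgt C s" "X = s \<odot> g" using assms(1) by (rule ldE)
  have t: "tgt C g = src C y" using assms(3) g cm by metis
  have "X \<odot> y = s \<odot> (g \<odot> y)" using g t assms(2) assoc by metis
  then show ?thesis using g t assms(2) cm by (intro ldI) auto
qed

lemma ld_prefix:
  assumes "r \<in> M" "W \<in> M" "tgt C r = src C W" "left_div C (r \<odot> W) X"
  shows "left_div C r X"
proof -
  obtain g where g: "g \<in> M" "src C g = tgt C (r \<odot> W)" "X = r \<odot> W \<odot> g" using assms(4) by (rule ldE)
  have t: "src C g = tgt C W" using g assms cm by metis
  have "X = r \<odot> (W \<odot> g)" using g t assms assoc by metis
  then show ?thesis using g t assms cm by (intro ldI) auto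
qed

lemma inv_ld:
  assumes "e \<in> invertibles C" "X \<in> M" "src C X = src C e"
  shows "left_div C e X"
proof -
  obtain e' where e: "e \<in> M" "e' \<in> M" "src C e' = tgt C e" "tgt C e' = src C e"
    "e \<odot> e' = idm C (src C e)" using assms(1) unfolding invertibles_def by blast
  have "e \<odot> (e' \<odot> X) = e \<odot> e' \<odot> X" using e assms assoc by metis
  also have "\<dots> = X" using e assms lid by metis
  finally show ?thesis using e assms cm by (intro ldI[of _ "e' \<odot> X"]) auto
qed

lemma ld_inv_mult:
  assumes "s \<in> M" "e \<in> invertibles C" "tgt C s = src C e" "left_div C s X"
  shows "left_div C (s \<odot> e) X"
proof -
  obtain e' where e: "e \<in> M" "e' \<in> M" "src C e' = tgt C e" "tgt C e' = src C e"
    "e \<odot> e' = idm C (src C e)" using assms(2) unfolding invertibles_def by blast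
  obtain g where g: "g \<in> M" "src C g = tgt C s" "X = s \<odot> g" using assms(4) by (rule ldE)
  have tg: "tgt C e' = src C g" using e g assms by simp
  have eg: "e' \<odot> g \<in> M" "src C (e' \<odot> g) = tgt C e" using cm[OF e(2) g(1) tg] e(3) by auto
  have "X = s \<odot> (idm C (src C g) \<odot> g)" using g lid by metis
  also have "\<dots> = s \<odot> (e \<odot> e' \<odot> g)" using e g assms by metis
  also have "\<dots> = s \<odot> (e \<odot> (e' \<odot> g))" using e g assms assoc by metis
  also have "\<dots> = s \<odot> e \<odot> (e' \<odot> g)" using e g assms assoc cm by metis
  finally have X: "X = s \<odot> e \<odot> (e' \<odot> g)" .
  have "s \<odot> e \<in> M" "tgt C (s \<odot> e) = tgt C e" using e assms cm by auto
  then show ?thesis using ldI[OF _ eg(1) _ X] eg e by auto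
qed

lemma pp: "is_path C x u \<Longrightarrow> path_prod C x u \<in> M \<and> src C (path_prod C x u) = x"
  by (induction u arbitrary: x) (auto simp: idm cm)

lemma greedy_tail: "greedy_path C S (a # u) \<Longrightarrow> greedy_path C S u"
  unfolding greedy_path_def by (metis Suc_less_eq length_Cons nth_Cons_Suc)

lemma greedy_head:
  "is_path C x u \<Longrightarrow> greedy_path C S u \<Longrightarrow> u \<noteq> [] \<Longrightarrow> s \<in> S \<Longrightarrow> f \<in> M \<Longrightarrow> tgt C f = x
   \<Longrightarrow> left_div C s (f \<odot> path_prod C x u) \<Longrightarrow> left_div C s (f \<odot> hd u)"
proof (induction u arbitrary: x f)
  case Nil
  then show ?case by simp
next
  case (Cons s1 u')
  have s1: "s1 \<in> M" "src C s1 = x" "is_path C (tgt C s1) u'" using Cons.prems by auto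
  show ?case
  proof (cases u')
    case Nil
    then show ?thesis using Cons.prems rid s1 by simp
  next
    case (Cons s2 u'')
    define P where "P = path_prod C (tgt C s1) u'"
    have P: "P \<in> M" "src C P = tgt C s1" using pp[OF s1(3)] P_def by auto
    have eq: "f \<odot> path_prod C x (s1 # u') = f \<odot> s1 \<odot> P"
      using assoc[OF Cons.prems(5) s1(1) P(1)] Cons.prems(6) s1 P P_def by simp
    have fs1: "f \<odot> s1 \<in> M" "tgt C (f \<odot> s1) = tgt C s1" using cm Cons.prems s1 by auto
    have gt: "greedy_path C S u'" using greedy_tail Cons.prems(2) by blast
    have "left_div C s (f \<odot> s1 \<odot> hd u')"
      using Cons.IH[OF s1(3) gt _ Cons.prems(4) fs1] Cons.prems(7) eq P_def \<open>u' = s2 # u''\<close> by auto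
    then have "left_div C s (f \<odot> s1 \<odot> s2)" using \<open>u' = s2 # u''\<close> by simp
    moreover have "greedy2 C S s1 s2" using Cons.prems(2) \<open>u' = s2 # u''\<close>
      unfolding greedy_path_def by (metis Suc_less_eq length_Cons nth_Cons_0 nth_Cons_Suc zero_less_Suc)
    ultimately show ?thesis unfolding greedy2_def using Cons.prems s1 by auto
  qed
qed

lemma sharp_mor: "S \<subseteq> M \<Longrightarrow> sharp C S \<subseteq> M"
  unfolding sharp_def invertibles_def using cm by auto

lemma sharp_head:
  assumes "S \<subseteq> M" "r \<in> sharp C S" "is_path C x u" "greedy_path C S u" "u \<noteq> []"
    "f \<in> M" "tgt C f = x" "left_div C r (f \<odot> path_prod C x u)"
  shows "left_div C r (f \<odot> hd u)"
proof -
  have hu: "hd u \<in> M" "src C (hd u) = x" using assms(3,5) by (cases u; auto)+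
  have P: "path_prod C x u \<in> M" "src C (path_prod C x u) = x" using pp[OF assms(3)] by auto
  from assms(2) consider (a) s e where "s \<in> S" "e \<in> invertibles C" "tgt C s = src C e" "r = s \<odot> e"
    | (b) "r \<in> invertibles C" unfolding sharp_def by blast
  then show ?thesis
  proof cases
    case a
    have e: "e \<in> M" using a(2) unfolding invertibles_def by blast
    have "left_div C s (f \<odot> path_prod C x u)" using ld_prefix a assms(1,8) e by blast
    then have "left_div C s (f \<odot> hd u)" using greedy_head assms a by blast
    then show ?thesis using ld_inv_mult a assms(1) by blast
  next
    case b
    have "src C (f \<odot> path_prod C x u) = src C r" using ld_mor[OF assms(8)] by simp
    then have "src C (f \<odot> hd u) = src C r" using cm(2)[OF assms(6) P(1)] cm(2)[OF assms(6) hu(1)] assms(7) hu P by simp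
    then show ?thesis using inv_ld[OF b] cm(1)[OF assms(6) hu(1)] assms(7) hu by simp
  qed
qed

lemma path_disj:
  assumes SM: "S \<subseteq> M" and u: "is_path C x u" "normal_path C S u" "u \<noteq> []"
    and v: "is_path C x v" "normal_path C S v" "v \<noteq> []"
    and hd: "left_disjoint C (hd u) (hd v)"
  shows "is_path C y w \<Longrightarrow> set w \<subseteq> sharp C S \<Longrightarrow> h' \<in> M \<Longrightarrow> tgt C h' = x
    \<Longrightarrow> left_div C (path_prod C y w) (h' \<odot> path_prod C x u)
    \<Longrightarrow> left_div C (path_prod C y w) (h' \<odot> path_prod C x v)
    \<Longrightarrow> left_div C (path_prod C y w) h'"
proof (induction w arbitrary: y h')
  case Nil
  have y: "y \<in> obj C" using Nil by simp
  have U: "path_prod C x u \<in> M" "src C (path_prod C x u) = x" using pp[OF u(1)] by auto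
  have "src C (h' \<odot> path_prod C x u) = y" using ld_mor(2)[OF Nil.prems(5)] idm[OF y] by simp
  then have "src C h' = y" using cm(2)[OF Nil.prems(3) U(1)] U Nil.prems(4) by simp
  then show ?case using ldI[OF idm(1)[OF y] Nil.prems(3)] idm[OF y] lid[OF Nil.prems(3)] by simp
next
  case (Cons r w')
  have r: "r \<in> M" "src C r = y" "is_path C (tgt C r) w'" "r \<in> sharp C S" "set w' \<subseteq> sharp C S"
    using Cons.prems sharp_mor[OF SM] by auto
  define W where "W = path_prod C (tgt C r) w'"
  have W: "W \<in> M" "src C W = tgt C r" using pp[OF r(3)] W_def by auto
  have rW: "r \<odot> W \<in> M" "tgt C (r \<odot> W) = tgt C W" using cm r W by auto
  have pw: "path_prod C y (r # w') = r \<odot> W" using W_def r by simp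
  have gu: "greedy_path C S u" "greedy_path C S v" using u v unfolding normal_path_def by auto
  have "left_div C r (h' \<odot> hd u)"
    using sharp_head[OF SM r(4) u(1) gu(1) u(3) Cons.prems(3,4)] ld_prefix[OF r(1) W(1)] W
      Cons.prems(5) pw by auto
  moreover have "left_div C r (h' \<odot> hd v)"
    using sharp_head[OF SM r(4) v(1) gu(2) v(3) Cons.prems(3,4)] ld_prefix[OF r(1) W(1)] W
      Cons.prems(6) pw by auto
  moreover have "tgt C h' = src C (hd u)" using u Cons.prems(4) by (cases u) auto
  ultimately have "left_div C r h'" using hd r Cons.prems(3) unfolding left_disjoint_def by blast
  then obtain h'' where h'': "h'' \<in> M" "src C h'' = tgt C r" "h' = r \<odot> h''" by (rule ldE)
  have th'': "tgt C h'' = x" using h'' cm(3)[OF r(1) h''(1)] r Cons.prems(4) by simp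
  have step: "left_div C W (h'' \<odot> path_prod C x z)"
    if z: "is_path C x z" and ld: "left_div C (r \<odot> W) (h' \<odot> path_prod C x z)" for z
  proof -
    have Z: "path_prod C x z \<in> M" "src C (path_prod C x z) = x" using pp[OF z] by auto
    obtain g1 where g1: "g1 \<in> M" "src C g1 = tgt C (r \<odot> W)" "h' \<odot> path_prod C x z = r \<odot> W \<odot> g1"
      using ld by (rule ldE)
    have sg: "src C g1 = tgt C W" using g1 rW by simp
    have e1: "h' \<odot> path_prod C x z = r \<odot> (h'' \<odot> path_prod C x z)"
      using h'' assoc[OF r(1) h''(1) Z(1)] th'' Z by simp
    have e2: "r \<odot> W \<odot> g1 = r \<odot> (W \<odot> g1)" using assoc[OF r(1) W(1) g1(1)] W sg by simp
    have "h'' \<odot> path_prod C x z = W \<odot> g1"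
    proof (rule lcan[OF r(1)])
      show "h'' \<odot> path_prod C x z \<in> M" "tgt C r = src C (h'' \<odot> path_prod C x z)"
        using cm[OF h''(1) Z(1)] th'' Z h'' by auto
      show "W \<odot> g1 \<in> M" "tgt C r = src C (W \<odot> g1)" using cm[OF W(1) g1(1)] sg W by auto
      show "r \<odot> (h'' \<odot> path_prod C x z) = r \<odot> (W \<odot> g1)" using e1 e2 g1 by simp
    qed
    then show ?thesis using ldI[OF W(1) g1(1) sg] by simp
  qed
  have "left_div C W h''"
    using Cons.IH[OF r(3) r(5) h''(1) th''] step[OF u(1)] step[OF v(1)] Cons.prems(5,6) pw W_def
    by simp
  then obtain z where z: "z \<in> M" "src C z = tgt C W" "h'' = W \<odot> z" by (rule ldE)
  have "h' = r \<odot> W \<odot> z" using h'' z assoc[OF r(1) W(1) z(1)] W by simp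
  then show ?case using pw ldI[OF rW(1) z(1)] z rW by simp
qed


lemma sym_disj:
  assumes G: "garside_family C S" and sn: "sym_normal C S x u v"
  shows "left_disjoint C (path_prod C x u) (path_prod C x v)"
  unfolding left_disjoint_def
proof (intro ballI impI)
  fix h h'
  assume h: "h \<in> M" "h' \<in> M" "tgt C h' = src C (path_prod C x u)"
    and l1: "left_div C h (h' \<odot> path_prod C x u)" and l2: "left_div C h (h' \<odot> path_prod C x v)"
  have u: "is_path C x u" "normal_path C S u" and v: "is_path C x v" "normal_path C S v"
    using sn unfolding sym_normal_def by auto
  have tx: "tgt C h' = x" using h pp[OF u(1)] by simp
  show "left_div C h h'"
  proof (cases "u = [] \<or> v = []")
    case True
    then show ?thesis
    proof
      assume "u = []" then show ?thesis using l1 rid[OF h(2)] tx by simp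
    next
      assume "v = []" then show ?thesis using l2 rid[OF h(2)] tx by simp
    qed
  next
    case False
    have SM: "S \<subseteq> M" using G unfolding garside_family_def by auto
    have hd: "left_disjoint C (hd u) (hd v)" using sn False unfolding sym_normal_def by auto
    obtain w where w: "is_path C (src C h) w" "normal_path C S w" "path_prod C (src C h) w = h"
      using G h(1) unfolding garside_family_def by blast
    have ws: "set w \<subseteq> sharp C S" using w(2) unfolding normal_path_def by auto
    show ?thesis using path_disj[OF SM u _ v _ hd w(1) ws h(2) tx] False l1 l2 w(3) by simp
  qed
qed

lemma dir1:
  assumes G: "garside_family C S"
    and I: "\<forall>f\<in>mor C. \<forall>g\<in>mor C. common_right_mult C f g \<longrightarrow>
            (\<exists>x u v. sym_normal C S x u v \<and>
               bowtie C (f, g) (path_prod C x u, path_prod C x v))"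
  shows "cond_weak_left_lcms C"
  unfolding cond_weak_left_lcms_def
proof (intro ballI allI impI)
  fix f g h0
  assume f: "f \<in> M" and g: "g \<in> M" and fg: "tgt C f = tgt C g"
    and m1: "left_mult C h0 f" and m2: "left_mult C h0 g"
  obtain k1 where k1: "k1 \<in> M" "tgt C k1 = src C f" "h0 = k1 \<odot> f" using m1 by (rule lmE)
  obtain k2 where k2: "k2 \<in> M" "tgt C k2 = src C g" "h0 = k2 \<odot> g" using m2 by (rule lmE)
  have "common_right_mult C k1 k2" unfolding common_right_mult_def
    using ldI[OF k1(1) f k1(2)[symmetric] k1(3)] ldI[OF k2(1) g k2(2)[symmetric] k2(3)] by blast
  then obtain x u v where sn: "sym_normal C S x u v"
    and bt: "bowtie C (k1, k2) (path_prod C x u, path_prod C x v)" using I k1 k2 by blast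
  define a where "a = path_prod C x u"
  define b where "b = path_prod C x v"
  have a: "a \<in> M" "src C a = x" and b: "b \<in> M" "src C b = x"
    using sn pp unfolding sym_normal_def a_def b_def by auto
  have ld: "left_disjoint C a b" using sym_disj[OF G sn] a_def b_def by simp
  obtain h h' where hh: "h \<in> M" "h' \<in> M" "tgt C h = src C k1" "tgt C h' = src C a"
    "h \<odot> k1 = h' \<odot> a" "h \<odot> k2 = h' \<odot> b"
    using bt unfolding bowtie_def a_def b_def by auto
  have sk: "src C k1 = src C k2" using cm(2)[OF k1(1) f k1(2)] cm(2)[OF k2(1) g k2(2)] k1 k2 by simp
  have ta: "tgt C a = src C f" using cm(3)[OF hh(1) k1(1) hh(3)] cm(3)[OF hh(2) a(1) hh(4)] hh(5) k1 by simp
  have tb: "tgt C b = src C g" using cm(3)[OF hh(1) k2(1)] cm(3)[OF hh(2) b(1)] hh(3,4,6) k2 sk a b by simp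
  define c where "c = a \<odot> f"
  have c: "c \<in> M" "src C c = src C a" using cm[OF a(1) f ta] c_def by auto
  have "h' \<odot> (a \<odot> f) = h' \<odot> a \<odot> f" using assoc[OF hh(2) a(1) f hh(4) ta] by simp
  also have "\<dots> = h \<odot> k1 \<odot> f" using hh by simp
  also have "\<dots> = h \<odot> h0" using assoc[OF hh(1) k1(1) f hh(3) k1(2)] k1 by simp
  also have "\<dots> = h \<odot> k2 \<odot> g" using assoc[OF hh(1) k2(1) g] hh(3) sk k2 by simp
  also have "\<dots> = h' \<odot> b \<odot> g" using hh by simp
  also have "\<dots> = h' \<odot> (b \<odot> g)" using assoc[OF hh(2) b(1) g] hh(4) a b tb by simp
  finally have "h' \<odot> (a \<odot> f) = h' \<odot> (b \<odot> g)" .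
  then have cbg: "c = b \<odot> g"
    using lcan[OF hh(2) cm(1)[OF a(1) f ta] cm(1)[OF b(1) g tb]] cm(2)[OF a(1) f ta]
      cm(2)[OF b(1) g tb] hh(4) a b c_def by simp
  have "weak_left_lcm C c f g" unfolding weak_left_lcm_def
  proof (intro conjI allI impI)
    show "left_mult C c f" using lmI[OF f a(1) ta] c_def by simp
    show "left_mult C c g" using lmI[OF g b(1) tb] cbg by simp
  next
    fix h1
    assume p1: "left_mult C h1 f" and p2: "left_mult C h1 g"
      and "\<exists>k. left_mult C k h1 \<and> left_mult C k c"
    then obtain k where kk: "left_mult C k h1" "left_mult C k c" by blast
    obtain p where p: "p \<in> M" "tgt C p = src C f" "h1 = p \<odot> f" using p1 by (rule lmE)
    obtain q where q: "q \<in> M" "tgt C q = src C g" "h1 = q \<odot> g" using p2 by (rule lmE)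
    obtain r where r: "h1 \<in> M" "r \<in> M" "tgt C r = src C h1" "k = r \<odot> h1" using kk(1) by (rule lmE)
    obtain s where s: "s \<in> M" "tgt C s = src C c" "k = s \<odot> c" using kk(2) by (rule lmE)
    have sp: "src C p = tgt C r" using r p cm(2)[OF p(1) f p(2)] by simp
    have sq: "src C q = tgt C r" using r q cm(2)[OF q(1) g q(2)] by simp
    have tsa: "tgt C s = src C a" using s c by simp
    have "r \<odot> p \<odot> f = s \<odot> a \<odot> f"
      using assoc[OF r(2) p(1) f sp[symmetric] p(2)] assoc[OF s(1) a(1) f tsa ta] r s p c_def by simp
    then have rpsa: "r \<odot> p = s \<odot> a"
      using rcan[OF f cm(1)[OF r(2) p(1) sp[symmetric]] cm(1)[OF s(1) a(1) tsa]]
        cm(3)[OF r(2) p(1) sp[symmetric]] cm(3)[OF s(1) a(1) tsa] p(2) ta by simp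
    have "r \<odot> q \<odot> g = s \<odot> b \<odot> g"
      using assoc[OF r(2) q(1) g sq[symmetric] q(2)] assoc[OF s(1) b(1) g _ tb] tsa a b r s q cbg by simp
    then have rqsb: "r \<odot> q = s \<odot> b"
      using rcan[OF g cm(1)[OF r(2) q(1) sq[symmetric]] cm(1)[OF s(1) b(1)]]
        cm(3)[OF r(2) q(1) sq[symmetric]] cm(3)[OF s(1) b(1)] q(2) tb tsa a b by simp
    have "left_div C r s"
      using ld[unfolded left_disjoint_def, rule_format, OF r(2) s(1) tsa
        ldI[OF r(2) p(1) sp rpsa[symmetric]] ldI[OF r(2) q(1) sq rqsb[symmetric]]] .
    then obtain w where w: "w \<in> M" "src C w = tgt C r" "s = r \<odot> w" by (rule ldE)
    have tw: "tgt C w = src C a" using cm(3)[OF r(2) w(1) w(2)[symmetric]] w tsa by simp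
    have "r \<odot> p = r \<odot> (w \<odot> a)" using rpsa w assoc[OF r(2) w(1) a(1) w(2)[symmetric] tw] by simp
    moreover have "tgt C r = src C p" using sp by simp
    moreover have "tgt C r = src C (w \<odot> a)" using cm(2)[OF w(1) a(1) tw] w(2) by simp
    ultimately have pwa: "p = w \<odot> a"
      using lcan[OF r(2) p(1) cm(1)[OF w(1) a(1) tw]] by blast
    have "h1 = w \<odot> a \<odot> f" using p(3) pwa by simp
    also have "\<dots> = w \<odot> c" using assoc[OF w(1) a(1) f tw ta] c_def by simp
    finally have "h1 = w \<odot> c" .
    then show "left_mult C h1 c" using lmI[OF c(1) w(1)] tw c by simp
  qed
  moreover have "left_mult C h0 c"
  proof -
    have sk2: "src C k2 = tgt C h" using sk hh(3) by simp
    have "left_div C h h'"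
      using ld[unfolded left_disjoint_def, rule_format, OF hh(1) hh(2) hh(4)
        ldI[OF hh(1) k1(1) hh(3)[symmetric] hh(5)[symmetric]]
        ldI[OF hh(1) k2(1) sk2 hh(6)[symmetric]]] .
    then obtain z where z: "z \<in> M" "src C z = tgt C h" "h' = h \<odot> z" by (rule ldE)
    have tz: "tgt C z = src C a" using cm(3)[OF hh(1) z(1) z(2)[symmetric]] z hh by simp
    have "h \<odot> k1 = h \<odot> (z \<odot> a)" using hh z assoc[OF hh(1) z(1) a(1) z(2)[symmetric] tz] by simp
    moreover have "tgt C h = src C k1" using hh(3) by simp
    moreover have "tgt C h = src C (z \<odot> a)" using cm(2)[OF z(1) a(1) tz] z(2) by simp
    ultimately have "k1 = z \<odot> a"
      using lcan[OF hh(1) k1(1) cm(1)[OF z(1) a(1) tz]] by blast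
    then have "h0 = z \<odot> c" using k1 assoc[OF z(1) a(1) f tz ta] c_def by simp
    then show ?thesis using lmI[OF c(1) z(1)] tz c by simp
  qed
  ultimately show "\<exists>h. weak_left_lcm C h f g \<and> left_mult C h0 h" by blast
qed


lemma dir2:
  assumes G: "garside_family C S" and W: "cond_weak_left_lcms C"
  shows "\<forall>f\<in>mor C. \<forall>g\<in>mor C. common_right_mult C f g \<longrightarrow>
            (\<exists>x u v. sym_normal C S x u v \<and>
               bowtie C (f, g) (path_prod C x u, path_prod C x v))"
proof (intro ballI impI)
  fix f g assume f: "f \<in> M" and g: "g \<in> M" and cr: "common_right_mult C f g"
  obtain m where m1: "left_div C f m" and m2: "left_div C g m" using cr unfolding common_right_mult_def by blast
  obtain a where a: "a \<in> M" "src C a = tgt C f" "m = f \<odot> a" using m1 by (rule ldE)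
  obtain b where b: "b \<in> M" "src C b = tgt C g" "m = g \<odot> b" using m2 by (rule ldE)
  have ab: "tgt C a = tgt C b" using cm(3)[OF f a(1) a(2)[symmetric]] cm(3)[OF g b(1) b(2)[symmetric]] a b by simp
  have sfg: "src C f = src C g" using cm(2)[OF f a(1) a(2)[symmetric]] cm(2)[OF g b(1) b(2)[symmetric]] a b by simp
  have "left_mult C m a" using lmI[OF a(1) f a(2)[symmetric] a(3)] .
  moreover have "left_mult C m b" using lmI[OF b(1) g b(2)[symmetric] b(3)] .
  ultimately obtain c where wl: "weak_left_lcm C c a b" and mc: "left_mult C m c"
    using W a(1) b(1) ab unfolding cond_weak_left_lcms_def by blast
  obtain f' where f': "f' \<in> M" "tgt C f' = src C a" "c = f' \<odot> a" using wl unfolding weak_left_lcm_def by (blast elim: lmE)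
  obtain g' where g': "g' \<in> M" "tgt C g' = src C b" "c = g' \<odot> b" using wl unfolding weak_left_lcm_def by (blast elim: lmE)
  obtain d where d: "c \<in> M" "d \<in> M" "tgt C d = src C c" "m = d \<odot> c" using mc by (rule lmE)
  have sc: "src C c = src C f'" "src C c = src C g'" using cm(2)[OF f'(1) a(1) f'(2)] cm(2)[OF g'(1) b(1) g'(2)] f' g' by simp_all
  have td: "tgt C d = src C f'" "tgt C d = src C g'" using d sc by simp_all
  have "f \<odot> a = d \<odot> f' \<odot> a" using a d f' assoc[OF d(2) f'(1) a(1) td(1) f'(2)] by simp
  moreover have "tgt C f = src C a" using a by simp
  moreover have "tgt C (d \<odot> f') = src C a" using cm(3)[OF d(2) f'(1) td(1)] f' by simp
  ultimately have fdf: "f = d \<odot> f'" using rcan[OF a(1) f cm(1)[OF d(2) f'(1) td(1)]] by blast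
  have "g \<odot> b = d \<odot> g' \<odot> b" using a b d g' assoc[OF d(2) g'(1) b(1) td(2) g'(2)] by simp
  moreover have "tgt C g = src C b" using b by simp
  moreover have "tgt C (d \<odot> g') = src C b" using cm(3)[OF d(2) g'(1) td(2)] g' by simp
  ultimately have gdg: "g = d \<odot> g'" using rcan[OF b(1) g cm(1)[OF d(2) g'(1) td(2)]] by blast
  define y where "y = src C f'"
  have sg': "src C g' = y" using sc y_def by simp
  have disj: "left_disjoint C f' g'" unfolding left_disjoint_def
  proof (intro ballI impI)
    fix h h' assume h: "h \<in> M" "h' \<in> M" "tgt C h' = src C f'"
      and l1: "left_div C h (h' \<odot> f')" and l2: "left_div C h (h' \<odot> g')"
    obtain x1 where x1: "x1 \<in> M" "src C x1 = tgt C h" "h' \<odot> f' = h \<odot> x1" using l1 by (rule ldE)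
    obtain y1 where y1: "y1 \<in> M" "src C y1 = tgt C h" "h' \<odot> g' = h \<odot> y1" using l2 by (rule ldE)
    have hg: "tgt C h' = src C g'" using h sc by simp
    have tx1: "tgt C x1 = src C a" using cm(3)[OF h(2) f'(1) h(3)] cm(3)[OF h(1) x1(1) x1(2)[symmetric]] x1 f' by simp
    have ty1: "tgt C y1 = src C b" using cm(3)[OF h(2) g'(1) hg] cm(3)[OF h(1) y1(1) y1(2)[symmetric]] y1 g' by simp
    have hc: "tgt C h' = src C c" using h sc by simp
    have e1: "h \<odot> (x1 \<odot> a) = h' \<odot> c"
      using assoc[OF h(1) x1(1) a(1) x1(2)[symmetric] tx1] assoc[OF h(2) f'(1) a(1) h(3) f'(2)] x1 f' by simp
    have e2: "h \<odot> (y1 \<odot> b) = h' \<odot> c"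
      using assoc[OF h(1) y1(1) b(1) y1(2)[symmetric] ty1] assoc[OF h(2) g'(1) b(1) hg g'(2)] y1 g' by simp
    have xy: "x1 \<odot> a = y1 \<odot> b"
    proof (rule lcan[OF h(1) cm(1)[OF x1(1) a(1) tx1] cm(1)[OF y1(1) b(1) ty1]])
      show "tgt C h = src C (x1 \<odot> a)" using cm(2)[OF x1(1) a(1) tx1] x1 by simp
      show "tgt C h = src C (y1 \<odot> b)" using cm(2)[OF y1(1) b(1) ty1] y1 by simp
      show "h \<odot> (x1 \<odot> a) = h \<odot> (y1 \<odot> b)" using e1 e2 by simp
    qed
    have lm1: "left_mult C (x1 \<odot> a) a" using lmI[OF a(1) x1(1) tx1] by simp
    have lm2: "left_mult C (x1 \<odot> a) b" using lmI[OF b(1) y1(1) ty1] xy by simp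
    have "left_mult C (h' \<odot> c) (x1 \<odot> a)"
      using lmI[OF cm(1)[OF x1(1) a(1) tx1] h(1)] cm(2)[OF x1(1) a(1) tx1] x1 e1 by simp
    moreover have "left_mult C (h' \<odot> c) c" using lmI[OF d(1) h(2) hc] by simp
    ultimately have "left_mult C (x1 \<odot> a) c"
      using wl lm1 lm2 unfolding weak_left_lcm_def by blast
    then obtain z where z: "z \<in> M" "tgt C z = src C c" "x1 \<odot> a = z \<odot> c" by (blast elim: lmE)
    have tz: "tgt C z = src C f'" using z sc by simp
    have "x1 \<odot> a = z \<odot> f' \<odot> a" using z f' assoc[OF z(1) f'(1) a(1) tz f'(2)] by simp
    moreover have "tgt C (z \<odot> f') = src C a" using cm(3)[OF z(1) f'(1) tz] f' by simp
    ultimately have xz: "x1 = z \<odot> f'" using rcan[OF a(1) x1(1) cm(1)[OF z(1) f'(1) tz]] tx1 by blast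
    have "h' \<odot> f' = h \<odot> z \<odot> f'" using x1 xz assoc[OF h(1) z(1) f'(1) _ tz] cm(2)[OF z(1) f'(1) tz] by simp
    moreover have "tgt C (h \<odot> z) = src C f'" 
      using cm(3)[OF h(1) z(1)] cm(2)[OF z(1) f'(1) tz] x1 xz tz by simp
    moreover have szh: "src C z = tgt C h" using cm(2)[OF z(1) f'(1) tz] x1 xz by simp
    ultimately have "h' = h \<odot> z" using rcan[OF f'(1) h(2) cm(1)[OF h(1) z(1) szh[symmetric]]] h(3) by blast
    then show "left_div C h h'" using ldI[OF h(1) z(1) szh] by simp
  qed
  obtain u where u: "is_path C y u" "normal_path C S u" "path_prod C y u = f'"
    using G f'(1) y_def unfolding garside_family_def by blast
  obtain v where v: "is_path C y v" "normal_path C S v" "path_prod C y v = g'"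
    using G g'(1) sg' unfolding garside_family_def by metis
  have hdj: "left_disjoint C (hd u) (hd v)" if ne: "u \<noteq> []" "v \<noteq> []"
    unfolding left_disjoint_def
  proof (intro ballI impI)
    fix h h' assume h: "h \<in> M" "h' \<in> M" "tgt C h' = src C (hd u)"
      and l1: "left_div C h (h' \<odot> hd u)" and l2: "left_div C h (h' \<odot> hd v)"
    obtain s1 u' where us: "u = s1 # u'" using ne by (cases u) auto
    obtain t1 v' where vs: "v = t1 # v'" using ne by (cases v) auto
    have s1: "s1 \<in> M" "src C s1 = y" "is_path C (tgt C s1) u'" using u us by auto
    have t1: "t1 \<in> M" "src C t1 = y" "is_path C (tgt C t1) v'" using v vs by auto
    have U: "path_prod C (tgt C s1) u' \<in> M" "src C (path_prod C (tgt C s1) u') = tgt C s1" using pp[OF s1(3)] by auto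
    have V: "path_prod C (tgt C t1) v' \<in> M" "src C (path_prod C (tgt C t1) v') = tgt C t1" using pp[OF t1(3)] by auto
    have th: "tgt C h' = y" using h s1 us by simp
    have "left_div C h (h' \<odot> s1 \<odot> path_prod C (tgt C s1) u')"
      using ld_right[OF _ U(1)] l1 us cm(3)[OF h(2) s1(1)] th s1 U by simp
    then have L1: "left_div C h (h' \<odot> f')"
      using assoc[OF h(2) s1(1) U(1)] th s1 U u(3) us by simp
    have "left_div C h (h' \<odot> t1 \<odot> path_prod C (tgt C t1) v')"
      using ld_right[OF _ V(1)] l2 vs cm(3)[OF h(2) t1(1)] th t1 V by simp
    then have L2: "left_div C h (h' \<odot> g')"
      using assoc[OF h(2) t1(1) V(1)] th t1 V v(3) vs by simp
    show "left_div C h h'"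
      using disj[unfolded left_disjoint_def, rule_format, OF h(1,2) _ L1 L2] th y_def by simp
  qed
  have sn: "sym_normal C S y u v" unfolding sym_normal_def using u v hdj by blast
  have "idm C (src C f) \<in> M" "tgt C (idm C (src C f)) = src C f" using idm src_obj[OF f] by auto
  moreover have "tgt C d = src C (path_prod C y u)" using td u y_def by simp
  moreover have "idm C (src C f) \<odot> f = d \<odot> path_prod C y u" using lid[OF f] fdf u by simp
  moreover have "idm C (src C f) \<odot> g = d \<odot> path_prod C y v" using lid[OF g] gdg v sfg by simp
  ultimately have "bowtie C (f, g) (path_prod C y u, path_prod C y v)"
    unfolding bowtie_def using d(2) by auto
  then show "\<exists>x u v. sym_normal C S x u v \<and> bowtie C (f, g) (path_prod C x u, path_prod C x v)"
    using sn by blast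
qed


end

theorem mainTheorem4:
  fixes C :: "('o, 'm) cat" and S :: "'m set"
  assumes "category C" and "cancellative C" and "garside_family C S"
  shows "(\<forall>f\<in>mor C. \<forall>g\<in>mor C. common_right_mult C f g \<longrightarrow>
            (\<exists>x u v. sym_normal C S x u v \<and>
               bowtie C (f, g) (path_prod C x u, path_prod C x v)))
         \<longleftrightarrow> cond_weak_left_lcms C"
proof -
  interpret ccat C using assms(1,2) by unfold_locales
  show ?thesis using dir1[OF assms(3)] dir2[OF assms(3)] by blast
qed

end
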